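(* Fix a domain structure $\Delta$ and a partition $S_0\sqcup S_1\sqcup S_2=\mathrm{Pooled}(\Delta)$. When $\theta$ is restricted so that every $\theta_{cd}$ is Kronecker non-separable, it still holds that, for all $(\pi,\theta)$ in the restricted parameter space outside a Lebesgue-null set, $\mathrm{rank}_\kappa A^{(k)}=\min(C,\kappa_k)$ for $k=0,1,2$, where $\kappa_k=\prod_{j\in\bigcup_{\mathscr P\in S_k}\mathscr P}Q_j$.
   Context: Notation: for a positive integer $n$, $\mathbb{Z}_n=\{0,1,\dots,n-1\}$. A domain latent class model (DLCM) has $J$ categorical items; item $j\in\mathbb{Z}_J$ takes values in $\mathbb{Z}_{Q_j}$ with $Q_j\ge 2$. An observation consists of a response vector $X_i$ and a latent class $c_i\in\mathbb{Z}_C$. The parameters are $\omega=(\pi,\theta,\Delta)$: $\pi$ is a probability vector with $P(c_i=c)=\pi_c$; $\Delta=(\delta_{jc})$ is a $J\times C$ matrix with entries in $\mathbb{Z}_D$; $J(c,d)=\{j:\delta_{jc}=d\}$, and $(c,d)$ with $J(c,d)\neq\emptyset$ is a domain. For $S\subseteq\mathbb{Z}_J$ with elements $j_1<\dots<j_m$, $V(S)^\top X=\sum_{k} X_{j_k}\prod_{l<k}Q_{j_l}$. For each domain, $\theta_{cd}$ is a probability vector over the $R_{cd}=\prod_{j\in J(c,d)}Q_j$ patterns, and given $c_i=c$ the subvectors on distinct domains are independent with $P(V(J(c,d))^\top X_i=r\mid c_i=c)=\theta_{cdr}$. For fixed $\Delta$, $(\pi,\theta)$ ranges over a product of simplices with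 Lebesgue measure. $\theta_{cd}$ is Kronecker separable if there is a partition $J(c,d)=J_0\sqcup J_1$ into two nonempty parts such that under $\theta_{cd}$ the subvectors on $J_0$ and $J_1$ are independent; otherwise non-separable. $\mathrm{Pooled}(\Delta)$ is the partition of $\mathbb{Z}_J$ into the vertex sets of connected components of the graph with edges $j\leftrightarrow j'$ whenever $\delta_{jc}=\delta_{j'c}$ for some $c$. With $M=|\mathrm{Pooled}(\Delta)|$, $\mathbf P(\mathscr P\mid c)$ the vector with entries $P(V(\mathscr P)^\top X_i=r\mid\omega,c_i=c)$, and $B_{\mathscr P}$ the matrix with $c$-th column $\pi_c^{1/M}\mathbf P(\mathscr P\mid c)$, set $A^{(k)}=\bigotimes^*_{\mathscr P\in S_k}B_{\mathscr P}$ (column-wise Kronecker product; $1\times C$ matrix of ones if $S_k=\emptyset$). $\mathrm{rank}_\kappa$ denotes Kruskal rank: the largest $k$ such that every $k$ columns are linearly independent. *)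

theory Defs
  imports "HOL-Analysis.Analysis"
begin

text \<open>Domain latent class model (DLCM). Items are 0..J-1, item j takes values in {0..<Q j};
  classes 0..C-1; the domain structure is Delta j c (entries in {0..<D}).\<close>

definition enc :: "(nat \<Rightarrow> nat) \<Rightarrow> nat set \<Rightarrow> (nat \<Rightarrow> nat) \<Rightarrow> nat" where
  "enc Q S x = (\<Sum>j\<in>S. x j * (\<Prod>j'\<in>{j'\<in>S. j' < j}. Q j'))"

definition patterns :: "(nat \<Rightarrow> nat) \<Rightarrow> nat set \<Rightarrow> (nat \<Rightarrow> nat) set" where
  "patterns Q S = PiE S (\<lambda>j. {..<Q j})"

definition Jset :: "nat \<Rightarrow> (nat \<Rightarrow> nat \<Rightarrow> nat) \<Rightarrow> nat \<Rightarrow> nat \<Rightarrow> nat set" where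
  "Jset J Delta c d = {j. j < J \<and> Delta j c = d}"

definition domains :: "nat \<Rightarrow> nat \<Rightarrow> nat \<Rightarrow> (nat \<Rightarrow> nat \<Rightarrow> nat) \<Rightarrow> (nat \<times> nat) set" where
  "domains J C D Delta = {(c,d). c < C \<and> d < D \<and> Jset J Delta c d \<noteq> {}}"

definition Rcd :: "nat \<Rightarrow> (nat \<Rightarrow> nat) \<Rightarrow> (nat \<Rightarrow> nat \<Rightarrow> nat) \<Rightarrow> nat \<Rightarrow> nat \<Rightarrow> nat" where
  "Rcd J Q Delta c d = (\<Prod>j\<in>Jset J Delta c d. Q j)"

text \<open>The product of simplices is
  parametrised by dropping the last coordinate of every probability vector:
  Inl c ~ pi_c (c < C-1), Inr (c,d,r) ~ theta_{cdr} (r < R_cd - 1). Lebesgue measure on the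
  product of simplices is Lebesgue measure in these coordinates.\<close>
type_synonym pidx = "nat + nat \<times> nat \<times> nat"

definition param_index ::
  "nat \<Rightarrow> (nat \<Rightarrow> nat) \<Rightarrow> nat \<Rightarrow> nat \<Rightarrow> (nat \<Rightarrow> nat \<Rightarrow> nat) \<Rightarrow> pidx set" where
  "param_index J Q C D Delta =
     Inl ` {..<C - 1} \<union>
     Inr ` {(c,d,r). (c,d) \<in> domains J C D Delta \<and> r < Rcd J Q Delta c d - 1}"

definition param_measure ::
  "nat \<Rightarrow> (nat \<Rightarrow> nat) \<Rightarrow> nat \<Rightarrow> nat \<Rightarrow> (nat \<Rightarrow> nat \<Rightarrow> nat) \<Rightarrow> (pidx \<Rightarrow> real) measure" where
  "param_measure J Q C D Delta = PiM (param_index J Q C D Delta) (\<lambda>_. lborel)"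

definition pi_of :: "nat \<Rightarrow> (pidx \<Rightarrow> real) \<Rightarrow> nat \<Rightarrow> real" where
  "pi_of C x c = (if c < C - 1 then x (Inl c) else 1 - (\<Sum>c'<C - 1. x (Inl c')))"

definition theta_of ::
  "nat \<Rightarrow> (nat \<Rightarrow> nat) \<Rightarrow> (nat \<Rightarrow> nat \<Rightarrow> nat) \<Rightarrow> (pidx \<Rightarrow> real) \<Rightarrow> nat \<Rightarrow> nat \<Rightarrow> nat \<Rightarrow> real" where
  "theta_of J Q Delta x c d r =
     (let R = Rcd J Q Delta c d in
      if r < R - 1 then x (Inr (c,d,r)) else 1 - (\<Sum>r'<R - 1. x (Inr (c,d,r'))))"

definition in_simplices ::
  "nat \<Rightarrow> (nat \<Rightarrow> nat) \<Rightarrow> nat \<Rightarrow> nat \<Rightarrow> (nat \<Rightarrow> nat \<Rightarrow> nat) \<Rightarrow> (pidx \<Rightarrow> real) \<Rightarrow> bool" where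
  "in_simplices J Q C D Delta x \<longleftrightarrow>
     (\<forall>c<C. pi_of C x c \<ge> 0) \<and>
     (\<forall>(c,d)\<in>domains J C D Delta. \<forall>r<Rcd J Q Delta c d. theta_of J Q Delta x c d r \<ge> 0)"

definition marg :: "(nat \<Rightarrow> nat) \<Rightarrow> nat set \<Rightarrow> ((nat \<Rightarrow> nat) \<Rightarrow> real) \<Rightarrow> nat set \<Rightarrow> (nat \<Rightarrow> nat) \<Rightarrow> real" where
  "marg Q S f A u = (\<Sum>v\<in>{v\<in>patterns Q S. restrict v A = u}. f v)"

definition kron_separable :: "(nat \<Rightarrow> nat) \<Rightarrow> nat set \<Rightarrow> ((nat \<Rightarrow> nat) \<Rightarrow> real) \<Rightarrow> bool" where
  "kron_separable Q S f \<longleftrightarrow>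
     (\<exists>A B. A \<noteq> {} \<and> B \<noteq> {} \<and> A \<inter> B = {} \<and> A \<union> B = S \<and>
        (\<forall>v\<in>patterns Q S. f v = marg Q S f A (restrict v A) * marg Q S f B (restrict v B)))"

definition theta_dist ::
  "nat \<Rightarrow> (nat \<Rightarrow> nat) \<Rightarrow> (nat \<Rightarrow> nat \<Rightarrow> nat) \<Rightarrow> (pidx \<Rightarrow> real) \<Rightarrow> nat \<Rightarrow> nat \<Rightarrow> (nat \<Rightarrow> nat) \<Rightarrow> real" where
  "theta_dist J Q Delta x c d v = theta_of J Q Delta x c d (enc Q (Jset J Delta c d) v)"

definition cond_prob ::
  "nat \<Rightarrow> (nat \<Rightarrow> nat) \<Rightarrow> nat \<Rightarrow> nat \<Rightarrow> (nat \<Rightarrow> nat \<Rightarrow> nat) \<Rightarrow> (pidx \<Rightarrow> real) \<Rightarrow> nat \<Rightarrow> (nat \<Rightarrow> nat) \<Rightarrow> real" where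
  "cond_prob J Q C D Delta x c v =
     (\<Prod>d\<in>{d. (c,d) \<in> domains J C D Delta}. theta_dist J Q Delta x c d v)"

definition block_prob ::
  "nat \<Rightarrow> (nat \<Rightarrow> nat) \<Rightarrow> nat \<Rightarrow> nat \<Rightarrow> (nat \<Rightarrow> nat \<Rightarrow> nat) \<Rightarrow> (pidx \<Rightarrow> real) \<Rightarrow> nat set \<Rightarrow> nat \<Rightarrow> nat \<Rightarrow> real" where
  "block_prob J Q C D Delta x P c r =
     (\<Sum>v\<in>{v\<in>patterns Q {..<J}. enc Q P v = r}. cond_prob J Q C D Delta x c v)"

definition pooled :: "nat \<Rightarrow> nat \<Rightarrow> (nat \<Rightarrow> nat \<Rightarrow> nat) \<Rightarrow> nat set set" where
  "pooled J C Delta =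
     {..<J} // ({(j,j'). j < J \<and> j' < J \<and> (\<exists>c<C. Delta j c = Delta j' c)}\<^sup>*)"

text \<open>Rows of A^(k) = column-wise Kronecker product of B_P, P in Sk: a row is a choice of a row
  index r_P < prod_{j in P} Q_j for each P in Sk (row order is irrelevant for Kruskal rank).
  If Sk is empty there is exactly one row and every entry is 1.\<close>
definition A_rows :: "(nat \<Rightarrow> nat) \<Rightarrow> nat set set \<Rightarrow> (nat set \<Rightarrow> nat) set" where
  "A_rows Q Sk = PiE Sk (\<lambda>P. {..<(\<Prod>j\<in>P. Q j)})"

definition A_col ::
  "nat \<Rightarrow> (nat \<Rightarrow> nat) \<Rightarrow> nat \<Rightarrow> nat \<Rightarrow> (nat \<Rightarrow> nat \<Rightarrow> nat) \<Rightarrow> nat set set \<Rightarrow> (pidx \<Rightarrow> real)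
     \<Rightarrow> nat \<Rightarrow> (nat set \<Rightarrow> nat) \<Rightarrow> real" where
  "A_col J Q C D Delta Sk x c f =
     (\<Prod>P\<in>Sk. root (card (pooled J C Delta)) (pi_of C x c) * block_prob J Q C D Delta x P c (f P))"

definition kruskal_rank :: "'r set \<Rightarrow> nat \<Rightarrow> (nat \<Rightarrow> 'r \<Rightarrow> real) \<Rightarrow> nat" where
  "kruskal_rank Rows n col =
     (GREATEST k. k \<le> n \<and>
        (\<forall>T\<subseteq>{..<n}. card T = k \<longrightarrow>
           (\<forall>a. (\<forall>row\<in>Rows. (\<Sum>c\<in>T. a c * col c row) = 0) \<longrightarrow> (\<forall>c\<in>T. a c = 0))))"

end

theory Submission
  imports Defs "Jordan_Normal_Form.Determinant" "HOL-Computational_Algebra.Polynomial"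
begin


lemma enc_cong: "(\<And>j. j \<in> S \<Longrightarrow> v j = w j) \<Longrightarrow> enc Q S v = enc Q S w"
  unfolding enc_def by (rule sum.cong) auto

lemma enc_insert:
  assumes "finite A" "\<forall>a\<in>A. a < b"
  shows "enc Q (insert b A) v = enc Q A v + v b * (\<Prod>j\<in>A. Q j)"
proof -
  have bA: "b \<notin> A" using assms(2) by auto
  have s1: "{j' \<in> insert b A. j' < b} = A" using assms(2) by auto
  have s2: "{j' \<in> insert b A. j' < j} = {j' \<in> A. j' < j}" if "j \<in> A" for j
    using assms(2) that by auto
  have "enc Q (insert b A) v = v b * (\<Prod>j'\<in>{j' \<in> insert b A. j' < b}. Q j') +
      (\<Sum>j\<in>A. v j * (\<Prod>j'\<in>{j' \<in> insert b A. j' < j}. Q j'))"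
    unfolding enc_def using assms(1) bA by simp
  also have "(\<Sum>j\<in>A. v j * (\<Prod>j'\<in>{j' \<in> insert b A. j' < j}. Q j')) = enc Q A v"
    unfolding enc_def using s2 by (intro sum.cong) auto
  also have "{j' \<in> insert b A. j' < b} = A" by (rule s1)
  finally show ?thesis by simp
qed

lemma patterns_insert_D:
  assumes "v \<in> patterns Q (insert b A)" "b \<notin> A"
  shows "restrict v A \<in> patterns Q A" "v b < Q b"
  using assms unfolding patterns_def by (auto simp: PiE_def Pi_def)

lemma enc_lt: "finite S \<Longrightarrow> v \<in> patterns Q S \<Longrightarrow> enc Q S v < (\<Prod>j\<in>S. Q j)"
proof (induction S arbitrary: v rule: finite_linorder_max_induct)
  case empty
  then show ?case by (simp add: enc_def)
next
  case (insert b A)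
  have bA: "b \<notin> A" using insert by auto
  have r: "restrict v A \<in> patterns Q A" "v b < Q b" using patterns_insert_D[OF insert(4) bA] by auto
  have e1: "enc Q A v = enc Q A (restrict v A)" by (rule enc_cong) auto
  have "enc Q A (restrict v A) < (\<Prod>j\<in>A. Q j)" by (rule insert(3)[OF r(1)])
  then have a: "enc Q A v < (\<Prod>j\<in>A. Q j)" using e1 by linarith
  have "enc Q A v + v b * (\<Prod>j\<in>A. Q j) < (\<Prod>j\<in>A. Q j) + v b * (\<Prod>j\<in>A. Q j)" using a by simp
  also have "\<dots> = Suc (v b) * (\<Prod>j\<in>A. Q j)" by simp
  also have "\<dots> \<le> Q b * (\<Prod>j\<in>A. Q j)" using r(2) by (intro mult_right_mono) auto
  finally show ?case using enc_insert[OF insert(1,2)] insert(1) bA by simp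
qed

lemma divmod_unique_aux:
  fixes a1 a2 x1 x2 N :: nat
  assumes "a1 < N" "a2 < N" "a1 + x1 * N = a2 + x2 * N"
  shows "a1 = a2 \<and> x1 = x2"
proof -
  have m1: "(a1 + x1 * N) mod N = a1" using assms(1) by simp
  have m2: "(a2 + x2 * N) mod N = a2" using assms(2) by simp
  have d1: "(a1 + x1 * N) div N = x1" using assms(1) by simp
  have d2: "(a2 + x2 * N) div N = x2" using assms(2) by simp
  show ?thesis using m1 m2 d1 d2 assms(3) by metis
qed

lemma enc_inj: "finite S \<Longrightarrow> inj_on (enc Q S) (patterns Q S)"
proof (induction S rule: finite_linorder_max_induct)
  case empty
  then show ?case by (simp add: patterns_def inj_on_def)
next
  case (insert b A)
  have bA: "b \<notin> A" using insert by auto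
  show ?case
  proof (rule inj_onI)
    fix v w assume v: "v \<in> patterns Q (insert b A)" and w: "w \<in> patterns Q (insert b A)"
      and e: "enc Q (insert b A) v = enc Q (insert b A) w"
    have rv: "restrict v A \<in> patterns Q A" using patterns_insert_D[OF v bA] by auto
    have rw: "restrict w A \<in> patterns Q A" using patterns_insert_D[OF w bA] by auto
    have ev: "enc Q A v = enc Q A (restrict v A)" by (rule enc_cong) auto
    have ew: "enc Q A w = enc Q A (restrict w A)" by (rule enc_cong) auto
    have "enc Q A v < (\<Prod>j\<in>A. Q j)" "enc Q A w < (\<Prod>j\<in>A. Q j)"
      using enc_lt[OF insert(1) rv] enc_lt[OF insert(1) rw] ev ew by auto
    then have "enc Q A v = enc Q A w \<and> v b = w b"
      using divmod_unique_aux e enc_insert[OF insert(1,2)] by metis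
    then have "restrict v A = restrict w A" "v b = w b"
      using insert(3) rv rw ev ew by (auto simp: inj_on_def)
    then show "v = w" using v w unfolding patterns_def
      by (intro ext) (metis PiE_E insertE restrict_apply')
  qed
qed

lemma enc_surj: "finite S \<Longrightarrow> r < (\<Prod>j\<in>S. Q j) \<Longrightarrow> \<exists>v\<in>patterns Q S. enc Q S v = r"
proof (induction S arbitrary: r rule: finite_linorder_max_induct)
  case empty
  then show ?case by (simp add: patterns_def enc_def)
next
  case (insert b A)
  have bA: "b \<notin> A" using insert by auto
  let ?N = "\<Prod>j\<in>A. Q j"
  have rl: "r < Q b * ?N" using insert(4) insert(1) bA by simp
  then have N0: "?N > 0" by (cases "?N = 0") auto
  obtain u where u: "u \<in> patterns Q A" "enc Q A u = r mod ?N"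
    using insert(3)[of "r mod ?N"] N0 by auto
  have q: "r div ?N < Q b" using rl N0 by (simp add: div_less_iff_less_mult mult.commute)
  define v where "v = u(b := r div ?N)"
  have "v \<in> patterns Q (insert b A)"
    using u(1) q bA unfolding v_def patterns_def by (auto simp: PiE_def Pi_def extensional_def)
  moreover have "enc Q A v = enc Q A u" unfolding v_def by (rule enc_cong) (use bA in auto)
  moreover have "enc Q (insert b A) v = enc Q A v + v b * ?N" by (rule enc_insert[OF insert(1,2)])
  moreover have "v b = r div ?N" unfolding v_def by simp
  ultimately show ?case using u(2) by (intro bexI[of _ v]) (auto simp: mod_div_mult_eq)
qed




definition prel :: "nat \<Rightarrow> nat \<Rightarrow> (nat \<Rightarrow> nat \<Rightarrow> nat) \<Rightarrow> (nat \<times> nat) set" where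
  "prel J C Delta = {(j,j'). j < J \<and> j' < J \<and> (\<exists>c<C. Delta j c = Delta j' c)}"

lemma pooled_eq: "pooled J C Delta = {(prel J C Delta)\<^sup>* `` {a} | a. a < J}"
  unfolding pooled_def prel_def quotient_def by auto

lemma prel_sym: "sym ((prel J C Delta)\<^sup>*)"
  by (rule sym_rtrancl) (auto simp: prel_def sym_def)

lemma prel_bound: "(a, b) \<in> (prel J C Delta)\<^sup>* \<Longrightarrow> a < J \<Longrightarrow> b < J"
  by (induction rule: rtrancl_induct) (auto simp: prel_def)

lemma pooled_sub: "P \<in> pooled J C Delta \<Longrightarrow> P \<subseteq> {..<J}"
proof
  fix j assume "P \<in> pooled J C Delta" "j \<in> P"
  then obtain a where "a < J" "P = (prel J C Delta)\<^sup>* `` {a}" unfolding pooled_eq by blast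
  then show "j \<in> {..<J}" using prel_bound \<open>j \<in> P\<close> by auto
qed

lemma pooled_finite_el: "P \<in> pooled J C Delta \<Longrightarrow> finite P"
  by (rule finite_subset[OF pooled_sub finite_lessThan])

lemma finite_pooled: "finite (pooled J C Delta)"
  unfolding pooled_eq by (rule finite_image_set) simp
lemma pooled_disj:
  assumes "P \<in> pooled J C Delta" "P' \<in> pooled J C Delta" "j \<in> P" "j \<in> P'"
  shows "P = P'"
proof -
  let ?r = "(prel J C Delta)\<^sup>*"
  obtain a b where a: "P = ?r `` {a}" and b: "P' = ?r `` {b}"
    using assms(1,2) unfolding pooled_eq by auto
  have "(a, j) \<in> ?r" "(b, j) \<in> ?r" using assms a b by auto
  then have "(j, b) \<in> ?r" using prel_sym by (auto simp: sym_def)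
  then have ab: "(a, b) \<in> ?r" using \<open>(a, j) \<in> ?r\<close> by (rule rtrancl_trans[rotated])
  then have ba: "(b, a) \<in> ?r" using prel_sym by (auto simp: sym_def)
  have "?r `` {a} \<subseteq> ?r `` {b}" using ba by (blast intro: rtrancl_trans)
  moreover have "?r `` {b} \<subseteq> ?r `` {a}" using ab by (blast intro: rtrancl_trans)
  ultimately show ?thesis unfolding a b by blast
qed

lemma phi_surj:
  assumes Q: "\<forall>j<J. Q j \<ge> 2" and Sk: "Sk \<subseteq> pooled J C Delta" and f: "f \<in> A_rows Q Sk"
  shows "\<exists>w \<in> patterns Q {..<J}. \<forall>P\<in>Sk. enc Q P w = f P"
proof -
  have "\<forall>P\<in>Sk. \<exists>u\<in>patterns Q P. enc Q P u = f P"
  proof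
    fix P assume P: "P \<in> Sk"
    then have "finite P" using Sk pooled_finite_el by blast
    moreover have "f P < (\<Prod>j\<in>P. Q j)" using f P unfolding A_rows_def by auto
    ultimately show "\<exists>u\<in>patterns Q P. enc Q P u = f P" by (rule enc_surj)
  qed
  then obtain u where u: "\<And>P. P \<in> Sk \<Longrightarrow> u P \<in> patterns Q P \<and> enc Q P (u P) = f P"
    by metis
  define w where "w = (\<lambda>j. if j < J then (if \<exists>P\<in>Sk. j \<in> P then u (SOME P. P \<in> Sk \<and> j \<in> P) j else 0) else undefined)"
  have some: "(SOME P'. P' \<in> Sk \<and> j \<in> P') = P" if "P \<in> Sk" "j \<in> P" for P j
  proof (rule some_equality)
    show "P \<in> Sk \<and> j \<in> P" using that by auto
    fix P' assume "P' \<in> Sk \<and> j \<in> P'"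
    then show "P' = P" using pooled_disj that Sk by blast
  qed
  have wP: "w j = u P j" if "P \<in> Sk" "j \<in> P" for P j
  proof -
    have "j < J" using that Sk pooled_sub by blast
    then show ?thesis unfolding w_def using some[OF that] that by auto
  qed
  have "w \<in> patterns Q {..<J}"
    unfolding patterns_def
  proof (rule PiE_I)
    fix j assume j: "j \<in> {..<J}"
    show "w j \<in> {..<Q j}"
    proof (cases "\<exists>P\<in>Sk. j \<in> P")
      case True
      then obtain P where P: "P \<in> Sk" "j \<in> P" by auto
      have "u P j < Q j" using u[OF P(1)] P(2) unfolding patterns_def by auto
      then show ?thesis using wP[OF P] by simp
    next
      case False
      then show ?thesis using j Q unfolding w_def by auto
    qed
  next
    fix j assume "j \<notin> {..<J}" then show "w j = undefined" unfolding w_def by auto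
  qed
  moreover have "enc Q P w = f P" if "P \<in> Sk" for P
  proof -
    have "enc Q P w = enc Q P (u P)" by (rule enc_cong) (use wP that in auto)
    then show ?thesis using u that by auto
  qed
  ultimately show ?thesis by blast
qed

definition colp where
  "colp J Q C D Delta Sk x c f = (\<Prod>P\<in>Sk. block_prob J Q C D Delta x P c (f P))"

lemma A_col_eq: "A_col J Q C D Delta Sk x c f =
   root (card (pooled J C Delta)) (pi_of C x c) ^ card Sk * colp J Q C D Delta Sk x c f"
  unfolding A_col_def colp_def by (simp add: prod.distrib)

lemma prod_indicator: "finite A \<Longrightarrow> (\<Prod>a\<in>A. if P a then 1 else 0) = (if \<forall>a\<in>A. P a then 1 else (0::real))"
  by (induction A rule: finite_induct) auto

lemma finite_patterns: "finite S \<Longrightarrow> finite (patterns Q S)"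
  unfolding patterns_def by (rule finite_PiE) auto

lemma Jset_sub: "Jset J Delta c d \<subseteq> {..<J}" unfolding Jset_def by auto

lemma restrict_patterns: "v \<in> patterns Q S' \<Longrightarrow> S \<subseteq> S' \<Longrightarrow> restrict v S \<in> patterns Q S"
  unfolding patterns_def by auto

lemma enc_lt_sub: "finite S \<Longrightarrow> S \<subseteq> S' \<Longrightarrow> v \<in> patterns Q S' \<Longrightarrow> enc Q S v < (\<Prod>j\<in>S. Q j)"
proof -
  assume a: "finite S" "S \<subseteq> S'" "v \<in> patterns Q S'"
  have "enc Q S v = enc Q S (restrict v S)" by (rule enc_cong) auto
  then show ?thesis using enc_lt[OF a(1) restrict_patterns[OF a(3,2)]] by simp
qed

lemma enc_eq_imp:
  assumes "finite S" "S \<subseteq> S'" "v \<in> patterns Q S'" "w \<in> patterns Q S'" "enc Q S v = enc Q S w" "j \<in> S"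
  shows "v j = w j"
proof -
  have "enc Q S (restrict v S) = enc Q S (restrict w S)"
    using assms(5) by (metis (no_types, lifting) enc_cong restrict_apply')
  then have "restrict v S = restrict w S"
    using enc_inj[OF assms(1)] restrict_patterns[OF assms(3,2)] restrict_patterns[OF assms(4,2)]
    by (auto simp: inj_on_def)
  then show ?thesis using assms(6) by (metis restrict_apply')
qed

definition xpt :: "nat \<Rightarrow> (nat \<Rightarrow> nat) \<Rightarrow> nat \<Rightarrow> (nat \<Rightarrow> nat \<Rightarrow> nat) \<Rightarrow> (nat \<Rightarrow> nat \<Rightarrow> nat) \<Rightarrow> pidx \<Rightarrow> real" where
  "xpt J Q C Delta w = (\<lambda>i. case i of Inl c \<Rightarrow> 1 / real C
      | Inr (c,d,r) \<Rightarrow> if r = enc Q (Jset J Delta c d) (w c) then 1 else 0)"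

lemma pi_xpt: "C \<ge> 1 \<Longrightarrow> c < C \<Longrightarrow> pi_of C (xpt J Q C Delta w) c = 1 / real C"
proof -
  assume C: "C \<ge> 1" "c < C"
  show ?thesis
  proof (cases "c < C - 1")
    case True then show ?thesis by (simp add: pi_of_def xpt_def)
  next
    case False
    have "pi_of C (xpt J Q C Delta w) c = 1 - real (C - 1) / real C"
      using False by (simp add: pi_of_def xpt_def)
    also have "\<dots> = 1 / real C" using C by (simp add: field_simps of_nat_diff)
    finally show ?thesis .
  qed
qed

lemma theta_xpt:
  assumes "r < Rcd J Q Delta c d" "enc Q (Jset J Delta c d) (w c) < Rcd J Q Delta c d"
  shows "theta_of J Q Delta (xpt J Q C Delta w) c d r = (if r = enc Q (Jset J Delta c d) (w c) then 1 else 0)"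
proof -
  let ?R = "Rcd J Q Delta c d" and ?e = "enc Q (Jset J Delta c d) (w c)"
  show ?thesis
  proof (cases "r < ?R - 1")
    case True then show ?thesis by (simp add: theta_of_def xpt_def)
  next
    case False
    then have r: "r = ?R - 1" using assms by auto
    have s: "(\<Sum>r'<?R - 1. xpt J Q C Delta w (Inr (c, d, r'))) = (if ?e < ?R - 1 then 1 else 0)"
      unfolding xpt_def by (simp add: sum.delta')
    have "theta_of J Q Delta (xpt J Q C Delta w) c d r = 1 - (if ?e < ?R - 1 then 1 else 0)"
      using False s by (simp add: theta_of_def Let_def)
    then show ?thesis using r assms by auto
  qed
qed

lemma Rcd_fin: "finite (Jset J Delta c d)" unfolding Jset_def by auto

lemma cond_xpt:
  assumes Dl: "\<forall>j<J. \<forall>c<C. Delta j c < D" and c: "c < C"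
    and w: "w c \<in> patterns Q {..<J}" and v: "v \<in> patterns Q {..<J}"
  shows "cond_prob J Q C D Delta (xpt J Q C Delta w) c v = (if v = w c then 1 else 0)"
proof -
  let ?Dc = "{d. (c, d) \<in> domains J C D Delta}"
  have fin: "finite ?Dc" unfolding domains_def by (rule finite_subset[of _ "{..<D}"]) auto
  have td: "theta_dist J Q Delta (xpt J Q C Delta w) c d v =
      (if enc Q (Jset J Delta c d) v = enc Q (Jset J Delta c d) (w c) then 1 else 0)" if "d \<in> ?Dc" for d
  proof -
    have "enc Q (Jset J Delta c d) v < Rcd J Q Delta c d"
      unfolding Rcd_def by (rule enc_lt_sub[OF Rcd_fin Jset_sub v])
    moreover have "enc Q (Jset J Delta c d) (w c) < Rcd J Q Delta c d"
      unfolding Rcd_def by (rule enc_lt_sub[OF Rcd_fin Jset_sub w])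
    ultimately show ?thesis unfolding theta_dist_def by (subst theta_xpt) auto
  qed
  have "cond_prob J Q C D Delta (xpt J Q C Delta w) c v =
    (\<Prod>d\<in>?Dc. if enc Q (Jset J Delta c d) v = enc Q (Jset J Delta c d) (w c) then 1 else 0)"
    unfolding cond_prob_def using td by (intro prod.cong) auto
  also have "\<dots> = (if \<forall>d\<in>?Dc. enc Q (Jset J Delta c d) v = enc Q (Jset J Delta c d) (w c) then 1 else 0)"
    by (rule prod_indicator[OF fin])
  also have "(\<forall>d\<in>?Dc. enc Q (Jset J Delta c d) v = enc Q (Jset J Delta c d) (w c)) \<longleftrightarrow> v = w c"
  proof
    assume H: "\<forall>d\<in>?Dc. enc Q (Jset J Delta c d) v = enc Q (Jset J Delta c d) (w c)"
    show "v = w c"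
    proof
      fix j show "v j = w c j"
      proof (cases "j < J")
        case True
        let ?d = "Delta j c"
        have jin: "j \<in> Jset J Delta c ?d" using True unfolding Jset_def by auto
        have "?d \<in> ?Dc" using jin Dl True c unfolding domains_def by auto
        then show ?thesis using enc_eq_imp[OF Rcd_fin Jset_sub v w _ jin] H by auto
      next
        case False
        then show ?thesis using v w unfolding patterns_def by (auto simp: PiE_def extensional_def)
      qed
    qed
  qed auto
  finally show ?thesis .
qed

lemma block_xpt:
  assumes Dl: "\<forall>j<J. \<forall>c<C. Delta j c < D" and c: "c < C" and w: "w c \<in> patterns Q {..<J}"
  shows "block_prob J Q C D Delta (xpt J Q C Delta w) P c r = (if enc Q P (w c) = r then 1 else 0)"
proof -
  let ?V = "{v \<in> patterns Q {..<J}. enc Q P v = r}"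
  have fin: "finite ?V" using finite_patterns[of "{..<J}" Q] by auto
  have "block_prob J Q C D Delta (xpt J Q C Delta w) P c r = (\<Sum>v\<in>?V. if v = w c then 1 else 0)"
    unfolding block_prob_def using cond_xpt[where c=c and w=w, OF Dl c w] by (intro sum.cong) auto
  also have "\<dots> = (if w c \<in> ?V then 1 else 0)" using fin by (simp add: sum.delta)
  finally show ?thesis using w by auto
qed

lemma colp_xpt:
  assumes Dl: "\<forall>j<J. \<forall>c<C. Delta j c < D" and c: "c < C" and w: "w c \<in> patterns Q {..<J}"
    and fin: "finite Sk"
  shows "colp J Q C D Delta Sk (xpt J Q C Delta w) c f = (if \<forall>P\<in>Sk. f P = enc Q P (w c) then 1 else 0)"
proof -
  have "colp J Q C D Delta Sk (xpt J Q C Delta w) c f = (\<Prod>P\<in>Sk. if f P = enc Q P (w c) then 1 else 0)"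
    unfolding colp_def
  proof (intro prod.cong refl)
    fix P show "block_prob J Q C D Delta (xpt J Q C Delta w) P c (f P) = (if f P = enc Q P (w c) then 1 else 0)"
      using block_xpt[where c=c and w=w and P=P and r="f P", OF Dl c w] by auto
  qed
  then show ?thesis using prod_indicator[OF fin] by simp
qed




inductive pf :: "'i set \<Rightarrow> (('i \<Rightarrow> real) \<Rightarrow> real) \<Rightarrow> bool" for I where
  pf_const: "pf I (\<lambda>x. c)"
| pf_var: "i \<in> I \<Longrightarrow> pf I (\<lambda>x. x i)"
| pf_add: "pf I f \<Longrightarrow> pf I g \<Longrightarrow> pf I (\<lambda>x. f x + g x)"
| pf_mult: "pf I f \<Longrightarrow> pf I g \<Longrightarrow> pf I (\<lambda>x. f x * g x)"

lemma pf_local: "pf I p \<Longrightarrow> (\<forall>i\<in>I. x i = y i) \<Longrightarrow> p x = p y"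
  by (induction rule: pf.induct) auto

lemma pf_sum: "finite A \<Longrightarrow> (\<And>a. a \<in> A \<Longrightarrow> pf I (f a)) \<Longrightarrow> pf I (\<lambda>x. \<Sum>a\<in>A. f a x)"
  by (induction A rule: finite_induct) (auto intro: pf.intros)

lemma pf_prod: "finite A \<Longrightarrow> (\<And>a. a \<in> A \<Longrightarrow> pf I (f a)) \<Longrightarrow> pf I (\<lambda>x. \<Prod>a\<in>A. f a x)"
  by (induction A rule: finite_induct) (auto intro: pf.intros)

lemma pf_minus: "pf I f \<Longrightarrow> pf I g \<Longrightarrow> pf I (\<lambda>x. f x - g x)"
proof -
  assume "pf I f" "pf I g"
  then have "pf I (\<lambda>x. f x + (-1) * g x)" by (intro pf.intros)
  then show ?thesis by simp
qed

lemma pf_mono: "pf I p \<Longrightarrow> I \<subseteq> I' \<Longrightarrow> pf I' p"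
  by (induction rule: pf.induct) (auto intro: pf.intros)

lemma pf_measurable: "pf I p \<Longrightarrow> p \<in> borel_measurable (PiM I (\<lambda>_. lborel))"
  by (induction rule: pf.induct) auto

lemma pf_decomp:
  assumes "pf (insert i I) p"
  shows "\<exists>PP. (\<forall>k. pf I (\<lambda>x. coeff (PP x) k)) \<and> (\<forall>x. p x = poly (PP x) (x i))"
  using assms
proof (induction rule: pf.induct)
  case (pf_const c)
  show ?case by (rule exI[of _ "\<lambda>x. [:c:]"]) (auto intro: pf.intros)
next
  case (pf_var j)
  show ?case
  proof (cases "j = i")
    case True
    show ?thesis by (rule exI[of _ "\<lambda>x. [:0,1:]"]) (auto simp: True intro: pf.intros)
  next
    case False
    with pf_var have j: "j \<in> I" by auto
    have "pf I (\<lambda>x. coeff [:x j:] k)" for k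
      by (cases k) (auto intro: pf.intros j)
    then show ?thesis by (intro exI[of _ "\<lambda>x. [:x j:]"]) auto
  qed
next
  case (pf_add f g)
  then obtain P1 P2 where P1: "\<forall>k. pf I (\<lambda>x. coeff (P1 x) k)" "\<forall>x. f x = poly (P1 x) (x i)"
    and P2: "\<forall>k. pf I (\<lambda>x. coeff (P2 x) k)" "\<forall>x. g x = poly (P2 x) (x i)" by blast
  show ?case
    by (rule exI[of _ "\<lambda>x. P1 x + P2 x"]) (auto simp: P1 P2 intro: pf.intros)
next
  case (pf_mult f g)
  then obtain P1 P2 where P1: "\<forall>k. pf I (\<lambda>x. coeff (P1 x) k)" "\<forall>x. f x = poly (P1 x) (x i)"
    and P2: "\<forall>k. pf I (\<lambda>x. coeff (P2 x) k)" "\<forall>x. g x = poly (P2 x) (x i)" by blast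
  show ?case
    by (rule exI[of _ "\<lambda>x. P1 x * P2 x"])
      (auto simp: P1 P2 coeff_mult intro!: pf_sum pf.intros)
qed

lemma pf_null:
  assumes "finite I" "pf I p" "p x0 \<noteq> 0"
  shows "{x \<in> space (PiM I (\<lambda>_. lborel)). p x = 0} \<in> null_sets (PiM I (\<lambda>_. lborel))"
  using assms
proof (induction I arbitrary: p x0 rule: finite_induct)
  case empty
  have h: "p x = p x0" for x using pf_local[OF empty(1)] by auto
  have "{x \<in> space (PiM {} (\<lambda>_. lborel)). p x = 0} = {}" using empty(2) by (metis (mono_tags, lifting) h empty_Collect_eq)
  then show ?case by (metis null_sets.empty_sets)
next
  case (insert i I)
  interpret product_sigma_finite "\<lambda>_. lborel" by standard
  obtain PP where PP: "\<forall>k. pf I (\<lambda>x. coeff (PP x) k)" "\<forall>x. p x = poly (PP x) (x i)"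
    using pf_decomp[OF insert(4)] by blast
  have "PP x0 \<noteq> 0" using PP insert(5) by auto
  then obtain k where k: "coeff (PP x0) k \<noteq> 0" by (metis leading_coeff_0_iff)
  let ?Z = "{x \<in> space (PiM (insert i I) (\<lambda>_. lborel)). p x = 0}"
  have Nk: "{x \<in> space (PiM I (\<lambda>_. lborel)). coeff (PP x) k = 0} \<in> null_sets (PiM I (\<lambda>_. lborel))"
    using insert(3)[of "\<lambda>x. coeff (PP x) k" x0] k PP by auto
  have pm: "p \<in> borel_measurable (PiM (insert i I) (\<lambda>_. lborel))"
    using pf_measurable[OF insert(4)] .
  have Zs: "?Z \<in> sets (PiM (insert i I) (\<lambda>_. lborel))"
    using pm by measurable
  have E1: "emeasure (PiM (insert i I) (\<lambda>_. lborel)) ?Z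
      = (\<integral>\<^sup>+ x. indicator ?Z x \<partial>PiM (insert i I) (\<lambda>_. lborel))"
    using Zs by simp
  have E2: "(\<integral>\<^sup>+ x. indicator ?Z x \<partial>PiM (insert i I) (\<lambda>_. lborel)) = (\<integral>\<^sup>+ x. (\<integral>\<^sup>+ y. indicator ?Z (x(i := y)) \<partial>lborel) \<partial>PiM I (\<lambda>_. lborel))"
    using Zs insert(1,2) by (intro product_nn_integral_insert) auto
  have AE: "AE x in PiM I (\<lambda>_. lborel). (\<integral>\<^sup>+ y. indicator ?Z (x(i := y)) \<partial>lborel) = 0"
    proof (rule AE_I'[OF Nk], safe)
    fix x assume x: "x \<in> space (PiM I (\<lambda>_. lborel))"
      and ne: "(\<integral>\<^sup>+ y. indicator ?Z (x(i := y)) \<partial>lborel) \<noteq> 0"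
    show "coeff (PP x) k = 0"
    proof (rule ccontr)
      assume c: "coeff (PP x) k \<noteq> 0"
      have eq: "PP (x(i := y)) = PP x" for y
      proof -
        have "coeff (PP (x(i := y))) n = coeff (PP x) n" for n
          using pf_local[OF spec[OF PP(1), of n], of "x(i := y)" x] insert(2) by auto
        then show ?thesis by (simp add: poly_eq_iff)
      qed
      have "PP x \<noteq> 0" using c by auto
      then have fin: "finite {y. poly (PP x) y = 0}" by (rule poly_roots_finite)
      have "(\<integral>\<^sup>+ y. indicator ?Z (x(i := y)) \<partial>lborel) \<le> (\<integral>\<^sup>+ y. indicator {y. poly (PP x) y = 0} y \<partial>lborel)"
        by (intro nn_integral_mono) (auto simp: indicator_def PP(2) eq)
      also have "\<dots> = emeasure lborel {y. poly (PP x) y = 0}"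
        using fin by (intro nn_integral_indicator) (metis finite_imp_null_set_lborel null_setsD2)
      also have "\<dots> = 0" using finite_imp_null_set_lborel[OF fin] by auto
      finally show False using ne by auto
    qed
  qed
  have "(\<integral>\<^sup>+ x. (\<integral>\<^sup>+ y. indicator ?Z (x(i := y)) \<partial>lborel) \<partial>PiM I (\<lambda>_. lborel)) = (\<integral>\<^sup>+ x. 0 \<partial>PiM I (\<lambda>_. lborel))"
    using nn_integral_cong_AE[OF AE] by simp
  then have "emeasure (PiM (insert i I) (\<lambda>_. lborel)) ?Z = 0" using E1 E2 by simp
  then show ?case using Zs by (auto simp: null_sets_def)
qed




lemma det_mat_expand:
  "Determinant.det (mat m m (\<lambda>(i,j). F i j)) =
     (\<Sum>p\<in>{p. p permutes {0..<m}}. signof p * (\<Prod>i\<in>{0..<m}. F i (p i)))"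
proof -
  have "(\<Prod>i\<in>{0..<m}. mat m m (\<lambda>(i,j). F i j) $$ (i, p i)) = (\<Prod>i\<in>{0..<m}. F i (p i))"
    if "p permutes {0..<m}" for p
    using that by (intro prod.cong refl) (auto simp: permutes_in_image)
  then show ?thesis unfolding Determinant.det_def by (auto intro: sum.cong)
qed

lemma pf_det:
  assumes "\<And>i j. pf I (\<lambda>x. F x i j)"
  shows "pf I (\<lambda>x. Determinant.det (mat m m (\<lambda>(i,j). F x i j)))"
proof -
  have "pf I (\<lambda>x. \<Sum>p\<in>{p. p permutes {0..<m}}. signof p * (\<Prod>i\<in>{0..<m}. F x i (p i)))"
    by (intro pf_sum pf_mult pf_const pf_prod assms) (auto simp: finite_permutations)
  then show ?thesis by (simp add: det_mat_expand)
qed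

lemma indep_det:
  fixes colp col :: "nat \<Rightarrow> 'r \<Rightarrow> real"
  assumes t: "bij_betw t {0..<m} T" and rs: "\<And>i. i < m \<Longrightarrow> rs i \<in> R"
    and s: "\<And>c. c \<in> T \<Longrightarrow> s c \<noteq> 0" and col: "\<And>c r. col c r = s c * colp c r"
    and d: "Determinant.det (mat m m (\<lambda>(i,j). colp (t j) (rs i))) \<noteq> 0"
  shows "\<forall>a. (\<forall>row\<in>R. (\<Sum>c\<in>T. a c * col c row) = 0) \<longrightarrow> (\<forall>c\<in>T. a c = 0)"
proof (intro allI impI)
  fix a assume H: "\<forall>row\<in>R. (\<Sum>c\<in>T. a c * col c row) = 0"
  let ?A = "mat m m (\<lambda>(i,j). colp (t j) (rs i))"
  let ?v = "vec m (\<lambda>j. a (t j) * s (t j))"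
  have "?A *\<^sub>v ?v = 0\<^sub>v m"
  proof (rule eq_vecI)
    fix i assume i: "i < dim_vec (0\<^sub>v m :: real vec)"
    then have i': "i < m" by simp
    have "(?A *\<^sub>v ?v) $ i = (\<Sum>j = 0..<m. colp (t j) (rs i) * (a (t j) * s (t j)))"
      using i' by (auto simp: scalar_prod_def intro!: sum.cong)
    also have "\<dots> = (\<Sum>j = 0..<m. a (t j) * col (t j) (rs i))"
      by (intro sum.cong refl) (simp add: col)
    also have "\<dots> = (\<Sum>c\<in>T. a c * col c (rs i))"
      using sum.reindex_bij_betw[OF t, of "\<lambda>c. a c * col c (rs i)"] by simp
    also have "\<dots> = 0" using H rs[OF i'] by auto
    finally show "(?A *\<^sub>v ?v) $ i = 0\<^sub>v m $ i" using i' by simp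
  qed simp
  moreover have "?v \<in> carrier_vec m" by simp
  moreover have "\<not> (\<exists>v. v \<in> carrier_vec m \<and> v \<noteq> 0\<^sub>v m \<and> ?A *\<^sub>v v = 0\<^sub>v m)"
    using det_0_iff_vec_prod_zero[of ?A m] d by simp
  ultimately have v0: "?v = 0\<^sub>v m" by blast
  show "\<forall>c\<in>T. a c = 0"
  proof
    fix c assume c: "c \<in> T"
    then have "c \<in> t ` {0..<m}" using t unfolding bij_betw_def by simp
    then obtain j where j: "j < m" "t j = c" by (auto simp: image_iff)
    have "?v $ j = 0" using v0 j by simp
    then have "a c * s c = 0" using j by simp
    then show "a c = 0" using s[OF c] by simp
  qed
qed

lemma dep_big:
  fixes col :: "nat \<Rightarrow> 'r \<Rightarrow> real"
  assumes R: "finite R" and n: "card R < n"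
  shows "\<exists>a. (\<forall>row\<in>R. (\<Sum>c\<in>{..<n}. a c * col c row) = 0) \<and> (\<exists>c\<in>{..<n}. a c \<noteq> 0)"
proof -
  obtain e where e: "bij_betw e {0..<card R} R" using ex_bij_betw_nat_finite[OF R] by blast
  let ?B = "mat n n (\<lambda>(i,j). if i < card R then col j (e i) else 0)"
  have "Determinant.det ?B = 0"
  proof -
    have Z: "(\<Prod>i\<in>{0..<n}. if i < card R then col (p i) (e i) else 0) = 0" for p
    proof (rule prod_zero)
      show "finite {0..<n}" by simp
      have "n - 1 \<in> {0..<n}" "\<not> (n - 1 < card R)" using n by auto
      then show "\<exists>i\<in>{0..<n}. (if i < card R then col (p i) (e i) else 0) = 0" by auto
    qed
    show ?thesis by (subst det_mat_expand) (simp add: Z del: prod_zero_iff)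
  qed
  then obtain v where v: "v \<in> carrier_vec n" "v \<noteq> 0\<^sub>v n" "?B *\<^sub>v v = 0\<^sub>v n"
    using det_0_iff_vec_prod_zero[of ?B n] by auto
  have "\<exists>c<n. v $ c \<noteq> 0"
  proof (rule ccontr)
    assume "\<not> (\<exists>c<n. v $ c \<noteq> 0)"
    then have "v = 0\<^sub>v n" using v(1) by (intro eq_vecI) auto
    then show False using v(2) by simp
  qed
  moreover have "(\<Sum>c\<in>{..<n}. v $ c * col c row) = 0" if row: "row \<in> R" for row
  proof -
    have "row \<in> e ` {0..<card R}" using e row unfolding bij_betw_def by simp
    then obtain i where i: "i < card R" "e i = row" by (auto simp: image_iff)
    have "(?B *\<^sub>v v) $ i = 0" using v(3) i n by simp
    moreover have "(?B *\<^sub>v v) $ i = (\<Sum>j = 0..<n. col j (e i) * v $ j)"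
      using i n v(1) by (auto simp: scalar_prod_def intro!: sum.cong)
    ultimately show ?thesis using i by (simp add: atLeast0LessThan mult.commute)
  qed
  ultimately show ?thesis by (intro exI[of _ "\<lambda>c. v $ c"]) auto
qed

lemma kr_eq:
  fixes col :: "nat \<Rightarrow> 'r \<Rightarrow> real"
  assumes R: "finite Rows" "card Rows = kap"
    and ind: "\<forall>T\<subseteq>{..<C}. card T = min C kap \<longrightarrow>
       (\<forall>a. (\<forall>row\<in>Rows. (\<Sum>c\<in>T. a c * col c row) = 0) \<longrightarrow> (\<forall>c\<in>T. a c = 0))"
  shows "kruskal_rank Rows C col = min C kap"
  unfolding kruskal_rank_def
proof (rule Greatest_equality)
  show "min C kap \<le> C \<and> (\<forall>T\<subseteq>{..<C}. card T = min C kap \<longrightarrow>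
       (\<forall>a. (\<forall>row\<in>Rows. (\<Sum>c\<in>T. a c * col c row) = 0) \<longrightarrow> (\<forall>c\<in>T. a c = 0)))"
    using ind by simp
next
  fix y assume y: "y \<le> C \<and> (\<forall>T\<subseteq>{..<C}. card T = y \<longrightarrow>
       (\<forall>a. (\<forall>row\<in>Rows. (\<Sum>c\<in>T. a c * col c row) = 0) \<longrightarrow> (\<forall>c\<in>T. a c = 0)))"
  show "y \<le> min C kap"
  proof (rule ccontr)
    assume "\<not> y \<le> min C kap"
    then have yk: "card Rows < y" using y R by auto
    obtain a where a: "\<forall>row\<in>Rows. (\<Sum>c\<in>{..<y}. a c * col c row) = 0" "\<exists>c\<in>{..<y}. a c \<noteq> 0"
      using dep_big[OF R(1) yk, of col] by blast
    have sub: "{..<y} \<subseteq> {..<C}" using y by auto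
    have "\<forall>a. (\<forall>row\<in>Rows. (\<Sum>c\<in>{..<y}. a c * col c row) = 0) \<longrightarrow> (\<forall>c\<in>{..<y}. a c = 0)"
      using conjunct2[OF y] sub card_lessThan by blast
    then have "\<forall>c\<in>{..<y}. a c = 0" using a(1) by blast
    then show False using a(2) by blast
  qed
qed




lemma finite_domains: "finite (domains J C D Delta)"
proof -
  have "domains J C D Delta \<subseteq> {..<C} \<times> {..<D}" unfolding domains_def by auto
  then show ?thesis by (rule finite_subset) simp
qed

lemma finite_param_index: "finite (param_index J Q C D Delta)"
proof -
  let ?S = "{(c,d,r). (c,d) \<in> domains J C D Delta \<and> r < Rcd J Q Delta c d - 1}"
  let ?G = "(\<lambda>(cd,r). (fst cd, snd cd, r)) ` (Sigma (domains J C D Delta) (\<lambda>cd. {..<Rcd J Q Delta (fst cd) (snd cd)}))"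
  have "?S \<subseteq> ?G"
  proof
    fix y assume "y \<in> ?S"
    then obtain c d r where y: "y = (c,d,r)" "(c,d) \<in> domains J C D Delta" "r < Rcd J Q Delta c d - 1" by auto
    show "y \<in> ?G" by (rule image_eqI[of _ _ "((c,d),r)"]) (use y in auto)
  qed
  moreover have "finite ?G" using finite_domains by auto
  ultimately have "finite ?S" by (rule finite_subset)
  then show ?thesis unfolding param_index_def by simp
qed

lemma pf_pi: "c < C \<Longrightarrow> pf (param_index J Q C D Delta) (\<lambda>x. pi_of C x c)"
proof (cases "c < C - 1")
  case True
  have "pf (param_index J Q C D Delta) (\<lambda>x. x (Inl c))" by (rule pf_var) (use True in \<open>simp add: param_index_def\<close>)
  then show ?thesis using True by (simp add: pi_of_def)
next
  case False
  have "pf (param_index J Q C D Delta) (\<lambda>x. 1 - (\<Sum>c'<C - 1. x (Inl c')))"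
    by (intro pf_minus pf_const pf_sum pf_var) (auto simp: param_index_def)
  then show ?thesis using False by (simp add: pi_of_def)
qed

lemma pf_theta: "(c,d) \<in> domains J C D Delta \<Longrightarrow> pf (param_index J Q C D Delta) (\<lambda>x. theta_of J Q Delta x c d r)"
proof -
  assume cd: "(c,d) \<in> domains J C D Delta"
  show ?thesis
  proof (cases "r < Rcd J Q Delta c d - 1")
    case True
    have "pf (param_index J Q C D Delta) (\<lambda>x. x (Inr (c,d,r)))"
      by (rule pf_var) (use True cd in \<open>simp add: param_index_def\<close>)
    then show ?thesis using True by (simp add: theta_of_def Let_def)
  next
    case False
    have "pf (param_index J Q C D Delta) (\<lambda>x. 1 - (\<Sum>r'<Rcd J Q Delta c d - 1. x (Inr (c,d,r'))))"
      by (intro pf_minus pf_const pf_sum pf_var) (use cd in \<open>auto simp: param_index_def\<close>)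
    then show ?thesis using False by (simp add: theta_of_def Let_def)
  qed
qed

lemma pf_cond: "pf (param_index J Q C D Delta) (\<lambda>x. cond_prob J Q C D Delta x c v)"
proof -
  have "{d. (c,d) \<in> domains J C D Delta} \<subseteq> {..<D}" by (auto simp: domains_def)
  then have fin: "finite {d. (c,d) \<in> domains J C D Delta}" by (rule finite_subset) simp
  show ?thesis unfolding cond_prob_def theta_dist_def
    by (intro pf_prod fin pf_theta) auto
qed

lemma pf_block: "pf (param_index J Q C D Delta) (\<lambda>x. block_prob J Q C D Delta x P c r)"
proof -
  have "{v \<in> patterns Q {..<J}. enc Q P v = r} \<subseteq> patterns Q {..<J}" by auto
  then have fin: "finite {v \<in> patterns Q {..<J}. enc Q P v = r}"
    by (rule finite_subset) (rule finite_patterns, simp)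
  show ?thesis unfolding block_prob_def by (intro pf_sum fin pf_cond)
qed

lemma pf_colp: "finite Sk \<Longrightarrow> pf (param_index J Q C D Delta) (\<lambda>x. colp J Q C D Delta Sk x c f)"
  unfolding colp_def by (intro pf_prod pf_block)

lemma rows_card:
  assumes Sk: "Sk \<subseteq> pooled J C Delta"
  shows "finite (A_rows Q Sk)" "card (A_rows Q Sk) = (\<Prod>j\<in>\<Union>Sk. Q j)"
proof -
  have fin: "finite Sk" using Sk finite_pooled by (rule finite_subset)
  show "finite (A_rows Q Sk)" unfolding A_rows_def using fin by (intro finite_PiE) auto
  have "card (A_rows Q Sk) = (\<Prod>P\<in>Sk. (\<Prod>j\<in>P. Q j))"
    unfolding A_rows_def using fin by (simp add: card_PiE)
  also have "\<dots> = (\<Prod>j\<in>\<Union>Sk. Q j)"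
  proof -
    have "\<forall>A\<in>Sk. finite A" using Sk pooled_finite_el by auto
    moreover have "\<forall>A\<in>Sk. \<forall>B\<in>Sk. A \<noteq> B \<longrightarrow> A \<inter> B = {}" using Sk pooled_disj by blast
    ultimately show ?thesis by (simp add: prod.Union_disjoint)
  qed
  finally show "card (A_rows Q Sk) = (\<Prod>j\<in>\<Union>Sk. Q j)" .
qed




lemma goodZ:
  assumes C: "C \<ge> 1" and Q: "\<forall>j<J. Q j \<ge> 2" and Dl: "\<forall>j<J. \<forall>c<C. Delta j c < D"
    and Sk: "Sk \<subseteq> pooled J C Delta" and T: "T \<subseteq> {..<C}" "card T = min C (\<Prod>j\<in>\<Union>Sk. Q j)"
  shows "\<exists>Z. Z \<in> null_sets (param_measure J Q C D Delta) \<and>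
    (\<forall>x\<in>space (param_measure J Q C D Delta). x \<notin> Z \<longrightarrow>
     (\<forall>a. (\<forall>row\<in>A_rows Q Sk. (\<Sum>c\<in>T. a c * A_col J Q C D Delta Sk x c row) = 0) \<longrightarrow> (\<forall>c\<in>T. a c = 0)))"
proof -
  define m where "m = card T"
  have finT: "finite T" using T(1) by (rule finite_subset) simp
  obtain t where t: "bij_betw t {0..<m} T" using ex_bij_betw_nat_finite[OF finT] unfolding m_def by blast
  have finSk: "finite Sk" using Sk finite_pooled by (rule finite_subset)
  have "card T \<le> card (A_rows Q Sk)" using T(2) rows_card[OF Sk] by simp
  then obtain h where h: "h ` T \<subseteq> A_rows Q Sk" "inj_on h T"
    using card_le_inj[OF finT rows_card(1)[OF Sk]] by blast
  have "\<forall>c\<in>T. \<exists>w. w \<in> patterns Q {..<J} \<and> (\<forall>P\<in>Sk. enc Q P w = h c P)"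
  proof
    fix c assume c: "c \<in> T"
    have "h c \<in> A_rows Q Sk" using h(1) c by blast
    from phi_surj[OF Q Sk this] show "\<exists>w. w \<in> patterns Q {..<J} \<and> (\<forall>P\<in>Sk. enc Q P w = h c P)" by blast
  qed
  from bchoice[OF this] obtain w where w: "\<forall>c\<in>T. w c \<in> patterns Q {..<J} \<and> (\<forall>P\<in>Sk. enc Q P (w c) = h c P)"
    by blast
  have tT: "t j \<in> T" if "j < m" for j using t that unfolding bij_betw_def by auto
  have tC: "t j < C" if "j < m" for j using tT[OF that] T(1) by auto
  define F where "F x i j = colp J Q C D Delta Sk x (t j) (h (t i))" for x i j
  define g where "g x = Determinant.det (mat m m (\<lambda>(i,j). F x i j)) * (\<Prod>c<C. pi_of C x c)" for x
  have pfg: "pf (param_index J Q C D Delta) g"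
    unfolding g_def F_def by (intro pf_mult pf_det pf_colp finSk pf_prod pf_pi) auto
  define x0 where "x0 = xpt J Q C Delta w"
  have F0: "F x0 i j = (if i = j then 1 else 0)" if ij: "i < m" "j < m" for i j
  proof -
    have "F x0 i j = (if \<forall>P\<in>Sk. h (t i) P = enc Q P (w (t j)) then 1 else 0)"
      unfolding F_def x0_def using colp_xpt[OF Dl tC[OF ij(2)] _ finSk] w tT[OF ij(2)] by auto
    also have "(\<forall>P\<in>Sk. h (t i) P = enc Q P (w (t j))) \<longleftrightarrow> (\<forall>P\<in>Sk. h (t i) P = h (t j) P)"
      using w tT[OF ij(2)] by auto
    also have "\<dots> \<longleftrightarrow> h (t i) = h (t j)"
    proof
      assume "\<forall>P\<in>Sk. h (t i) P = h (t j) P"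
      moreover have "h (t i) \<in> A_rows Q Sk" "h (t j) \<in> A_rows Q Sk" using h(1) tT ij by auto
      ultimately show "h (t i) = h (t j)" unfolding A_rows_def by (intro PiE_ext) auto
    qed auto
    also have "\<dots> \<longleftrightarrow> t i = t j" using h(2) tT ij by (auto simp: inj_on_def)
    also have "\<dots> \<longleftrightarrow> i = j" using t ij unfolding bij_betw_def inj_on_def by auto
    finally show ?thesis .
  qed
  have "mat m m (\<lambda>(i,j). F x0 i j) = 1\<^sub>m m" by (rule eq_matI) (auto simp: F0)
  then have "g x0 = (\<Prod>c<C. pi_of C x0 c)" unfolding g_def by simp
  also have "\<dots> = (\<Prod>c<C. 1 / real C)" unfolding x0_def using C by (intro prod.cong refl) (simp add: pi_xpt)
  finally have g0: "g x0 \<noteq> 0" using C by simp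
  let ?M = "param_measure J Q C D Delta"
  define Z where "Z = {x \<in> space ?M. g x = 0}"
  have Znull: "Z \<in> null_sets ?M"
    unfolding Z_def param_measure_def by (rule pf_null[OF finite_param_index pfg g0])
  have "\<forall>x\<in>space ?M. x \<notin> Z \<longrightarrow>
     (\<forall>a. (\<forall>row\<in>A_rows Q Sk. (\<Sum>c\<in>T. a c * A_col J Q C D Delta Sk x c row) = 0) \<longrightarrow> (\<forall>c\<in>T. a c = 0))"
  proof (intro ballI impI)
    fix x assume x: "x \<in> space ?M" "x \<notin> Z"
    then have gx: "g x \<noteq> 0" unfolding Z_def by auto
    then have dx: "Determinant.det (mat m m (\<lambda>(i,j). F x i j)) \<noteq> 0" unfolding g_def by auto
    have px: "pi_of C x c \<noteq> 0" if "c < C" for c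
    proof
      assume "pi_of C x c = 0"
      then have "(\<Prod>c<C. pi_of C x c) = 0" using that by (intro prod_zero) auto
      then show False using gx unfolding g_def by simp
    qed
    let ?s = "\<lambda>c. root (card (pooled J C Delta)) (pi_of C x c) ^ card Sk"
    have s: "?s c \<noteq> 0" if "c \<in> T" for c
    proof (cases "Sk = {}")
      case True then show ?thesis by simp
    next
      case False
      then have "pooled J C Delta \<noteq> {}" using Sk by auto
      then have "card (pooled J C Delta) > 0" using finite_pooled by (simp add: card_gt_0_iff)
      then have "root (card (pooled J C Delta)) (pi_of C x c) \<noteq> 0"
        using px[of c] that T(1) by (auto simp: real_root_eq_0_iff)
      then show ?thesis by simp
    qed
    show "\<forall>a. (\<forall>row\<in>A_rows Q Sk. (\<Sum>c\<in>T. a c * A_col J Q C D Delta Sk x c row) = 0) \<longrightarrow> (\<forall>c\<in>T. a c = 0)"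
    proof (rule indep_det[where t=t and m=m and rs="\<lambda>i. h (t i)" and s="?s"
          and colp="\<lambda>c r. colp J Q C D Delta Sk x c r"])
      show "bij_betw t {0..<m} T" by (rule t)
      show "\<And>i. i < m \<Longrightarrow> h (t i) \<in> A_rows Q Sk" using h(1) tT by auto
      show "\<And>c. c \<in> T \<Longrightarrow> ?s c \<noteq> 0" by (rule s)
      show "\<And>c r. A_col J Q C D Delta Sk x c r = ?s c * colp J Q C D Delta Sk x c r" by (rule A_col_eq)
      show "Determinant.det (mat m m (\<lambda>(i,j). colp J Q C D Delta Sk x (t j) (h (t i)))) \<noteq> 0"
        using dx unfolding F_def .
    qed
  qed
  then show ?thesis using Znull by blast
qed

theorem mainTheorem9:
  fixes J C D :: nat and Q :: "nat \<Rightarrow> nat" and Delta :: "nat \<Rightarrow> nat \<Rightarrow> nat"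
    and S :: "nat \<Rightarrow> nat set set"
  assumes "C \<ge> 1"
    and "\<forall>j<J. Q j \<ge> 2"
    and "\<forall>j<J. \<forall>c<C. Delta j c < D"
    and "S 0 \<union> S 1 \<union> S 2 = pooled J C Delta"
    and "S 0 \<inter> S 1 = {}" and "S 0 \<inter> S 2 = {}" and "S 1 \<inter> S 2 = {}"
  shows "\<exists>N \<in> null_sets (param_measure J Q C D Delta).
           \<forall>x \<in> space (param_measure J Q C D Delta).
             in_simplices J Q C D Delta x
             \<and> (\<forall>(c,d)\<in>domains J C D Delta.
                   \<not> kron_separable Q (Jset J Delta c d) (theta_dist J Q Delta x c d))
             \<and> x \<notin> N
             \<longrightarrow> (\<forall>k<3. kruskal_rank (A_rows Q (S k)) C (A_col J Q C D Delta (S k) x)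
                          = min C (\<Prod>j\<in>\<Union>(S k). Q j))"
proof -
  let ?M = "param_measure J Q C D Delta"
  define kap where "kap k = (\<Prod>j\<in>\<Union>(S k). Q j)" for k
  define Idx where "Idx = {(k,T). k < (3::nat) \<and> T \<subseteq> {..<C} \<and> card T = min C (kap k)}"
  have Sk: "S k \<subseteq> pooled J C Delta" if "k < 3" for k
  proof -
    have "k = 0 \<or> k = 1 \<or> k = 2" using that by auto
    then show ?thesis using assms(4) by auto
  qed
  have finIdx: "finite Idx"
  proof -
    have "Idx \<subseteq> {..<3} \<times> Pow {..<C}" unfolding Idx_def by auto
    then show ?thesis by (rule finite_subset) simp
  qed
  define propk where "propk k T x = (\<forall>a. (\<forall>row\<in>A_rows Q (S k). (\<Sum>c\<in>T. a c * A_col J Q C D Delta (S k) x c row) = 0) \<longrightarrow> (\<forall>c\<in>T. a c = 0))" for k T x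
  have "\<forall>kt\<in>Idx. \<exists>Z. Z \<in> null_sets ?M \<and> (\<forall>x\<in>space ?M. x \<notin> Z \<longrightarrow> propk (fst kt) (snd kt) x)"
  proof
    fix kt assume "kt \<in> Idx"
    then obtain k :: nat and T where kt: "kt = (k,T)" "k < 3" "T \<subseteq> {..<C}" "card T = min C (kap k)"
      unfolding Idx_def by auto
    show "\<exists>Z. Z \<in> null_sets ?M \<and> (\<forall>x\<in>space ?M. x \<notin> Z \<longrightarrow> propk (fst kt) (snd kt) x)"
      using goodZ[OF assms(1-3) Sk[OF kt(2)] kt(3)] kt(4) unfolding kt(1) propk_def kap_def by simp
  qed
  from bchoice[OF this] obtain Z where Z: "\<forall>kt\<in>Idx. Z kt \<in> null_sets ?M \<and> (\<forall>x\<in>space ?M. x \<notin> Z kt \<longrightarrow> propk (fst kt) (snd kt) x)"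
    by blast
  define N where "N = (\<Union>kt\<in>Idx. Z kt)"
  have Nnull: "N \<in> null_sets ?M" unfolding N_def
    by (rule null_sets_UN') (use finIdx Z in \<open>auto intro: countable_finite\<close>)
  have "\<forall>x \<in> space ?M. x \<notin> N \<longrightarrow> (\<forall>k<3. kruskal_rank (A_rows Q (S k)) C (A_col J Q C D Delta (S k) x)
                          = min C (\<Prod>j\<in>\<Union>(S k). Q j))"
  proof (intro ballI impI allI)
    fix x and k :: nat assume x: "x \<in> space ?M" "x \<notin> N" and k: "k < 3"
    have ind: "\<forall>T\<subseteq>{..<C}. card T = min C (kap k) \<longrightarrow> propk k T x"
    proof (intro allI impI)
      fix T assume T: "T \<subseteq> {..<C}" "card T = min C (kap k)"
      then have kt: "(k,T) \<in> Idx" unfolding Idx_def using k by auto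
      then have "x \<notin> Z (k,T)" using x(2) unfolding N_def by auto
      then show "propk k T x" using Z kt x(1) by fastforce
    qed
    show "kruskal_rank (A_rows Q (S k)) C (A_col J Q C D Delta (S k) x) = min C (\<Prod>j\<in>\<Union>(S k). Q j)"
      using kr_eq[OF rows_card[OF Sk[OF k]], where C=C and col="A_col J Q C D Delta (S k) x"] ind
      unfolding propk_def kap_def by simp
  qed
  then show ?thesis using Nnull by blast
qed


end
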